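(* For $0<R<1$, let $\mathbb G(R)$ be the unique solution in $(0,1)$ of the equation $G=1-e^{-G/R}$. Then for any choice of $\theta\ge1$, codes $\mathcal C=\{\mathscr C_1,\dots,\mathscr C_\theta\}$ and probability mass function $\boldsymbol\Lambda=(\Lambda_1,\dots,\Lambda_\theta)$ as in the context whose rate $k/\bar n$ equals $R$, the asymptotic threshold satisfies $$G^*(\mathcal C,\boldsymbol\Lambda)\le\mathbb G(R).$$
   Context: For $h=1,\dots,\theta$, $\mathscr C_h$ is an $(n_h,k)$ binary linear block code (common dimension $k$) with minimum distance $d_h\ge2$ and no idle symbols (no coordinate identically zero on the code); $\Lambda_h\ge0$, $\sum_h\Lambda_h=1$; $\bar n=\sum_h\Lambda_hn_h$ and the rate is $R=k/\bar n$. Un-normalized information function $\tilde e^{(h)}_g$ ($0\le g\le n_h$): the sum over all $g$-subsets of columns of a generator matrix of $\mathscr C_h$ of the rank of the corresponding $k\times g$ submatrix ($\tilde e_0=0$). For $G\ge0$ define $f_{\mathsf b}(p)=\frac1{\bar n}\sum_h\Lambda_h\sum_{t=0}^{n_h-1}p^t(1-p)^{n_h-1-t}[(n_h-t)\tilde e^{(h)}_{n_h-t}-(t+1)\tilde e^{(h)}_{n_h-1-t}]$, $f_{\mathsf s}(q)=1-\exp\{-\frac{G}{R}q\}$, and the recursion $p_\ell=f_{\mathsf s}(f_{\mathsf b}(p_{\ell-1}))$ with $p_0=1-e^{-G/R}$. The asymptotic threshold (capacity of the scheme) is $G^*(\mathcal C,\boldsymbol\Lambda)=\sup\{G\ge0: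 p_\ell\to0\text{ as }\ell\to\infty\}$. *)

theory Defs
  imports "HOL-Analysis.Analysis" "HOL-Library.Z2"
begin

text \<open>A binary (n,k) linear code is given by a generator matrix
  M :: nat => nat => bit, with rows i < k and columns j < n (entries over GF(2)).\<close>

definition cols_indep :: "(nat \<Rightarrow> nat \<Rightarrow> bit) \<Rightarrow> nat \<Rightarrow> nat set \<Rightarrow> bool" where
  "cols_indep M k T \<longleftrightarrow>
     (\<forall>c :: nat \<Rightarrow> bit. (\<forall>i<k. (\<Sum>j\<in>T. c j * M i j) = 0) \<longrightarrow> (\<forall>j\<in>T. c j = 0))"

definition col_rank :: "(nat \<Rightarrow> nat \<Rightarrow> bit) \<Rightarrow> nat \<Rightarrow> nat set \<Rightarrow> nat" where
  "col_rank M k S = Max {card T | T. T \<subseteq> S \<and> cols_indep M k T}"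

definition encode :: "(nat \<Rightarrow> nat \<Rightarrow> bit) \<Rightarrow> nat \<Rightarrow> nat \<Rightarrow> (nat \<Rightarrow> bit) \<Rightarrow> (nat \<Rightarrow> bit)" where
  "encode M k n u = (\<lambda>j. if j < n then (\<Sum>i<k. u i * M i j) else 0)"

definition code :: "(nat \<Rightarrow> nat \<Rightarrow> bit) \<Rightarrow> nat \<Rightarrow> nat \<Rightarrow> (nat \<Rightarrow> bit) set" where
  "code M k n = range (encode M k n)"

definition hweight :: "nat \<Rightarrow> (nat \<Rightarrow> bit) \<Rightarrow> nat" where
  "hweight n c = card {j. j < n \<and> c j \<noteq> 0}"

text \<open>M is a generator matrix of an (n,k) binary linear code (rank k),
  with minimum distance at least 2 and no idle symbols.\<close>
definition good_gen_matrix :: "(nat \<Rightarrow> nat \<Rightarrow> bit) \<Rightarrow> nat \<Rightarrow> nat \<Rightarrow> bool" where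
  "good_gen_matrix M k n \<longleftrightarrow>
     col_rank M k {..<n} = k
     \<and> (\<forall>c\<in>code M k n. c \<noteq> (\<lambda>_. 0) \<longrightarrow> hweight n c \<ge> 2)
     \<and> (\<forall>j<n. \<exists>c\<in>code M k n. c j \<noteq> 0)"

text \<open>Un-normalized information function e~_g.\<close>
definition info_fun :: "(nat \<Rightarrow> nat \<Rightarrow> bit) \<Rightarrow> nat \<Rightarrow> nat \<Rightarrow> nat \<Rightarrow> real" where
  "info_fun M k n g = (\<Sum>S\<in>{S. S \<subseteq> {..<n} \<and> card S = g}. real (col_rank M k S))"

definition avg_len :: "nat \<Rightarrow> (nat \<Rightarrow> real) \<Rightarrow> (nat \<Rightarrow> nat) \<Rightarrow> real" where
  "avg_len \<theta> \<Lambda> n = (\<Sum>h<\<theta>. \<Lambda> h * real (n h))"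

definition f_b :: "nat \<Rightarrow> (nat \<Rightarrow> real) \<Rightarrow> (nat \<Rightarrow> nat) \<Rightarrow> (nat \<Rightarrow> nat \<Rightarrow> nat \<Rightarrow> bit) \<Rightarrow> nat
                     \<Rightarrow> real \<Rightarrow> real" where
  "f_b \<theta> \<Lambda> n M k p = (1 / avg_len \<theta> \<Lambda> n) *
     (\<Sum>h<\<theta>. \<Lambda> h * (\<Sum>t<n h. p ^ t * (1 - p) ^ (n h - 1 - t) *
        (real (n h - t) * info_fun (M h) k (n h) (n h - t)
         - real (t + 1) * info_fun (M h) k (n h) (n h - 1 - t))))"

definition f_s :: "real \<Rightarrow> real \<Rightarrow> real \<Rightarrow> real" where
  "f_s G R q = 1 - exp (- (G / R) * q)"

definition p_seq :: "(real \<Rightarrow> real) \<Rightarrow> real \<Rightarrow> real \<Rightarrow> nat \<Rightarrow> real" where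
  "p_seq fb G R l = ((\<lambda>x. f_s G R (fb x)) ^^ l) (1 - exp (- G / R))"

definition threshold :: "nat \<Rightarrow> (nat \<Rightarrow> real) \<Rightarrow> (nat \<Rightarrow> nat) \<Rightarrow> (nat \<Rightarrow> nat \<Rightarrow> nat \<Rightarrow> bit) \<Rightarrow> nat \<Rightarrow> real" where
  "threshold \<theta> \<Lambda> n M k =
     Sup {G. G \<ge> 0 \<and> p_seq (f_b \<theta> \<Lambda> n M k) G (real k / avg_len \<theta> \<Lambda> n) \<longlonglongrightarrow> 0}"

definition GG :: "real \<Rightarrow> real" where
  "GG R = (THE G. 0 < G \<and> G < 1 \<and> G = 1 - exp (- G / R))"

end

theory Submission
  imports Defs "HOL-Library.Function_Algebras"
begin

definition bscale :: "bit \<Rightarrow> (nat \<Rightarrow> bit) \<Rightarrow> (nat \<Rightarrow> bit)" where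
  "bscale c v = (\<lambda>i. c * v i)"

interpretation bv: vector_space bscale
  by unfold_locales (auto simp: bscale_def fun_eq_iff algebra_simps)

definition col :: "(nat \<Rightarrow> nat \<Rightarrow> bit) \<Rightarrow> nat \<Rightarrow> nat \<Rightarrow> (nat \<Rightarrow> bit)" where
  "col M k j = (\<lambda>i. if i < k then M i j else 0)"

lemma sum_fun_apply: "finite A \<Longrightarrow> (\<Sum>x\<in>A. f x) i = (\<Sum>x\<in>A. f x i)"
  for f :: "'a \<Rightarrow> nat \<Rightarrow> 'b::comm_monoid_add"
  by (induction A rule: finite_induct) auto

lemma sum_col_apply_gen: "finite T \<Longrightarrow>
   (\<Sum>j\<in>T. (\<lambda>i. (c j::'b::comm_semiring_0) * (if i<k then M i j else 0))) i
   = (if i<k then \<Sum>j\<in>T. c j * M i j else 0)"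
  by (induction T rule: finite_induct) auto

lemma sum_col_apply: "finite T \<Longrightarrow>
   (\<Sum>j\<in>T. bscale (c j) (col M k j)) i = (if i<k then \<Sum>j\<in>T. c j * M i j else 0)"
  unfolding bscale_def col_def by (rule sum_col_apply_gen)

lemma sum_pair: "x \<noteq> y \<Longrightarrow> (\<Sum>j\<in>{x,y}. f j) = (f x + f y :: 'a::comm_monoid_add)"
  by simp

lemma bit_add_self: "(x::bit) + x = 0"
  by (cases x) auto

lemma cols_indep_iff:
  assumes "finite T"
  shows "cols_indep M k T \<longleftrightarrow> inj_on (col M k) T \<and> bv.independent (col M k ` T)"
proof
  assume ci: "cols_indep M k T"
  have inj: "inj_on (col M k) T"
  proof (rule inj_onI, rule ccontr)
    fix x y assume xy: "x \<in> T" "y \<in> T" "col M k x = col M k y" "x \<noteq> y"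
    define c where "c j = (if j = x \<or> j = y then 1 else (0::bit))" for j
    have "\<forall>i<k. (\<Sum>j\<in>T. c j * M i j) = 0"
    proof (intro allI impI)
      fix i assume "i < k"
      have Mxy: "M i x = M i y" using xy(3) \<open>i<k\<close> unfolding col_def by (metis)
      have "(\<Sum>j\<in>T. c j * M i j) = (\<Sum>j\<in>{x,y}. c j * M i j)"
        by (rule sum.mono_neutral_right) (use assms xy in \<open>auto simp: c_def\<close>)
      also have "\<dots> = c x * M i x + c y * M i y"
        using sum_pair[OF xy(4), of "\<lambda>j. c j * M i j"] .
      also have "\<dots> = M i x + M i y" by (simp add: c_def)
      also have "\<dots> = 0" using Mxy bit_add_self by simp
      finally show "(\<Sum>j\<in>T. c j * M i j) = 0" .
    qed
    with ci have "c x = 0" using xy unfolding cols_indep_def by blast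
    then show False by (simp add: c_def)
  qed
  have "bv.independent (col M k ` T)"
  proof -
    have "\<not> bv.dependent (col M k ` T)"
    proof
      assume dep: "bv.dependent (col M k ` T)"
      obtain u where u: "\<exists>v\<in>col M k ` T. u v \<noteq> 0" "(\<Sum>v\<in>col M k ` T. bscale (u v) v) = 0"
        using iffD1[OF bv.dependent_finite[OF finite_imageI[OF assms]] dep] by blast
      define c where "c j = u (col M k j)" for j
      have "(\<Sum>v\<in>col M k ` T. bscale (u v) v) = (\<Sum>j\<in>T. bscale (c j) (col M k j))"
        unfolding c_def by (rule sum.reindex[OF inj, unfolded comp_def])
      with u(2) have s: "(\<Sum>j\<in>T. bscale (c j) (col M k j)) = 0" by simp
      have "\<forall>i<k. (\<Sum>j\<in>T. c j * M i j) = 0"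
      proof (intro allI impI)
        fix i assume "i < k"
        have "(\<Sum>j\<in>T. bscale (c j) (col M k j)) i = 0" using s by simp
        then show "(\<Sum>j\<in>T. c j * M i j) = 0"
          using \<open>i<k\<close> sum_col_apply[OF assms, of c M k i] by simp
      qed
      with ci have "\<forall>j\<in>T. c j = 0" unfolding cols_indep_def by blast
      with u(1) show False by (auto simp: c_def)
    qed
    then show ?thesis .
  qed
  with inj show "inj_on (col M k) T \<and> bv.independent (col M k ` T)" by blast
next
  assume a: "inj_on (col M k) T \<and> bv.independent (col M k ` T)"
  show "cols_indep M k T"
    unfolding cols_indep_def
  proof (intro allI impI)
    fix c :: "nat \<Rightarrow> bit" assume h: "\<forall>i<k. (\<Sum>j\<in>T. c j * M i j) = 0"
    define u where "u v = c (inv_into T (col M k) v)" for v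
    have "(\<Sum>v\<in>col M k ` T. bscale (u v) v) = (\<Sum>j\<in>T. bscale (u (col M k j)) (col M k j))"
      by (rule sum.reindex[OF conjunct1[OF a], unfolded comp_def])
    also have "\<dots> = (\<Sum>j\<in>T. bscale (c j) (col M k j))"
      by (rule sum.cong) (use a in \<open>auto simp: u_def\<close>)
    also have "\<dots> = 0"
    proof
      fix i
      show "(\<Sum>j\<in>T. bscale (c j) (col M k j)) i = 0 i"
        using h sum_col_apply[OF assms, of c M k i] by (cases "i < k") auto
    qed
    finally have "(\<Sum>v\<in>col M k ` T. bscale (u v) v) = 0" .
    then have "\<forall>v\<in>col M k ` T. u v = 0"
      using conjunct2[OF a] bv.dependent_finite[OF finite_imageI[OF assms]] by blast
    then show "\<forall>j\<in>T. c j = 0" using a by (auto simp: u_def)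
  qed
qed

lemma bv_dim_insert:
  assumes "finite S"
  shows "bv.dim (insert x S) = (if x \<in> bv.span S then bv.dim S else Suc (bv.dim S))"
proof (cases "x \<in> bv.span S")
  case True then show ?thesis
    by (metis bv.dim_span bv.span_redundant)
next
  case False
  obtain B where B: "B \<subseteq> bv.span S" "bv.independent B" "bv.span S \<subseteq> bv.span B" "card B = bv.dim (bv.span S)"
    using bv.basis_exists [of "bv.span S"] by blast
  have finB: "finite B" using bv.independent_span_bound[OF assms B(2) B(1)] by blast
  have "bv.dim (bv.span (insert x S)) = Suc (bv.dim S)"
  proof (rule bv.dim_unique)
    show "insert x B \<subseteq> bv.span (insert x S)"
      by (meson B(1) insertI1 insert_subset order_trans bv.span_base bv.span_mono subset_insertI)
    show "bv.span (insert x S) \<subseteq> bv.span (insert x B)"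
      by (metis \<open>B \<subseteq> bv.span S\<close> \<open>bv.span S \<subseteq> bv.span B\<close> bv.span_breakdown_eq bv.span_subspace subsetI bv.subspace_span)
    show "bv.independent (insert x B)"
      by (metis B(1-3) bv.independent_insert bv.span_subspace bv.subspace_span False)
    show "card (insert x B) = Suc (bv.dim S)"
      using B False finB by force
  qed
  then show ?thesis
    by (metis False bv.dim_span)
qed

lemma col_rank_dim:
  assumes "finite S"
  shows "col_rank M k S = bv.dim (col M k ` S)"
proof -
  let ?V = "col M k ` S"
  let ?A = "{card T | T. T \<subseteq> S \<and> cols_indep M k T}"
  obtain B where B: "B \<subseteq> ?V" "bv.independent B" "?V \<subseteq> bv.span B" "card B = bv.dim ?V"
    using bv.basis_exists by blast
  have finB: "finite B" using B(1) assms finite_subset by blast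
  have finA: "finite ?A"
  proof -
    have "?A \<subseteq> card ` Pow S" by auto
    then show ?thesis using assms finite_subset by blast
  qed
  have ub: "\<forall>y\<in>?A. y \<le> bv.dim ?V"
  proof
    fix y assume "y \<in> ?A"
    then obtain T where T: "y = card T" "T \<subseteq> S" "cols_indep M k T" by blast
    have finT: "finite T" using T(2) assms finite_subset by blast
    have ii: "inj_on (col M k) T" "bv.independent (col M k ` T)"
      using T(3) cols_indep_iff[OF finT] by auto
    have "col M k ` T \<subseteq> bv.span B" using T(2) B(3) by blast
    then have "card (col M k ` T) \<le> card B"
      using bv.independent_span_bound[OF finB ii(2)] by blast
    then show "y \<le> bv.dim ?V" using T(1) B(4) card_image[OF ii(1)] by simp
  qed
  have mem: "bv.dim ?V \<in> ?A"
  proof -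
    define T where "T = inv_into S (col M k) ` B"
    have TS: "T \<subseteq> S" unfolding T_def using B(1) by (auto intro: inv_into_into)
    have img: "col M k ` T = B" unfolding T_def using B(1)
      by (auto simp: image_image f_inv_into_f subset_eq intro!: image_eqI)
    have injT: "inj_on (col M k) T"
      unfolding T_def using B(1) by (auto intro!: inj_onI simp: f_inv_into_f subset_eq)
    have finT: "finite T" using TS assms finite_subset by blast
    have "cols_indep M k T" using cols_indep_iff[OF finT] injT img B(2) by simp
    moreover have "card T = bv.dim ?V" using card_image[OF injT] img B(4) by simp
    ultimately show ?thesis using TS by (auto intro!: exI[of _ T])
  qed
  show ?thesis unfolding col_rank_def
    by (rule Max_eqI[OF finA]) (use ub mem in auto)
qed

lemma col_rank_insert:
  assumes "finite S"
  shows "col_rank M k (insert j S) = (if col M k j \<in> bv.span (col M k ` S) then col_rank M k S else Suc (col_rank M k S))"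
  using assms by (simp add: col_rank_dim bv_dim_insert)

lemma col_rank_dimret:
  assumes "finite S'" "S \<subseteq> S'"
  shows "real (col_rank M k (insert j S')) - real (col_rank M k S') \<le> real (col_rank M k (insert j S)) - real (col_rank M k S)"
proof -
  have fS: "finite S" using assms finite_subset by blast
  have "bv.span (col M k ` S) \<subseteq> bv.span (col M k ` S')" using assms(2) by (intro bv.span_mono) auto
  then show ?thesis using col_rank_insert[OF fS, of M k j] col_rank_insert[OF assms(1), of M k j] by auto
qed

lemma col_rank_le_card:
  assumes "finite S" shows "col_rank M k S \<le> card S"
  using col_rank_dim[OF assms] bv.dim_le_card'[of "col M k ` S"] card_image_le[OF assms, of "col M k"] assms
  by simp

lemma col_rank_empty: "col_rank M k {} = 0"
  using col_rank_le_card[of "{}"] by simp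


definition subs :: "nat \<Rightarrow> nat \<Rightarrow> nat set set" where
  "subs n s = {S. S \<subseteq> {..<n} \<and> card S = s}"

lemma finite_subs[simp]: "finite (subs n s)"
  unfolding subs_def by (rule finite_subset[of _ "Pow {..<n}"]) auto

lemma dc:
  "(\<Sum>S\<in>subs n s. \<Sum>i\<in>{..<n}-S. G (insert i S) i) = (\<Sum>T\<in>subs n (Suc s). \<Sum>i\<in>T. (G T i :: real))"
proof -
  have "(\<Sum>S\<in>subs n s. \<Sum>i\<in>{..<n}-S. G (insert i S) i) = (\<Sum>(S,i)\<in>Sigma (subs n s) (\<lambda>S. {..<n}-S). G (insert i S) i)"
    by (rule sum.Sigma) auto
  also have "\<dots> = (\<Sum>(T,i)\<in>Sigma (subs n (Suc s)) (\<lambda>T. T). G T i)"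
  proof (rule sum.reindex_bij_witness[where i="\<lambda>(T,i). (T - {i}, i)" and j="\<lambda>(S,i). (insert i S, i)"])
    fix a assume "a \<in> Sigma (subs n s) (\<lambda>S. {..<n}-S)"
    then obtain S i where a: "a = (S,i)" "S \<subseteq> {..<n}" "card S = s" "i < n" "i \<notin> S" by (auto simp: subs_def)
    have fS: "finite S" using a(2) finite_subset by blast
    show "(case (case a of (S, i) \<Rightarrow> (insert i S, i)) of (T, i) \<Rightarrow> (T - {i}, i)) = a" using a by auto
    show "(case a of (S, i) \<Rightarrow> (insert i S, i)) \<in> Sigma (subs n (Suc s)) (\<lambda>T. T)"
      using a fS by (auto simp: subs_def)
    show "(case (case a of (S, i) \<Rightarrow> (insert i S, i)) of (T, i) \<Rightarrow> G T i) = (case a of (S, i) \<Rightarrow> G (insert i S) i)"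
      using a by auto
  next
    fix b assume "b \<in> Sigma (subs n (Suc s)) (\<lambda>T. T)"
    then obtain T i where b: "b = (T,i)" "T \<subseteq> {..<n}" "card T = Suc s" "i \<in> T" by (auto simp: subs_def)
    have fT: "finite T" using b(2) finite_subset by blast
    show "(case (case b of (T, i) \<Rightarrow> (T - {i}, i)) of (S, i) \<Rightarrow> (insert i S, i)) = b" using b by auto
    show "(case b of (T, i) \<Rightarrow> (T - {i}, i)) \<in> Sigma (subs n s) (\<lambda>S. {..<n}-S)"
      using b fT by (auto simp: subs_def)
  qed
  also have "\<dots> = (\<Sum>T\<in>subs n (Suc s). \<Sum>i\<in>T. G T i)"
    by (rule sum.Sigma[symmetric]) (auto simp: subs_def intro: finite_subset)
  finally show ?thesis .
qed

definition D :: "(nat \<Rightarrow> nat \<Rightarrow> bit) \<Rightarrow> nat \<Rightarrow> nat \<Rightarrow> nat \<Rightarrow> real" where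
  "D M k n s = (\<Sum>S\<in>subs n s. \<Sum>j\<in>{..<n}-S. (real (col_rank M k (insert j S)) - real (col_rank M k S)))"

lemma info_fun_subs: "info_fun M k n g = (\<Sum>S\<in>subs n g. real (col_rank M k S))"
  unfolding info_fun_def subs_def by simp

lemma D_eq: "D M k n s = real (Suc s) * info_fun M k n (Suc s) - real (n - s) * info_fun M k n s"
proof -
  have "D M k n s = (\<Sum>S\<in>subs n s. \<Sum>j\<in>{..<n}-S. real (col_rank M k (insert j S)))
        - (\<Sum>S\<in>subs n s. \<Sum>j\<in>{..<n}-S. real (col_rank M k S))"
    unfolding D_def by (simp add: sum_subtractf)
  also have "(\<Sum>S\<in>subs n s. \<Sum>j\<in>{..<n}-S. real (col_rank M k (insert j S)))
      = (\<Sum>T\<in>subs n (Suc s). \<Sum>i\<in>T. real (col_rank M k T))"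
    by (rule dc)
  also have "\<dots> = (\<Sum>T\<in>subs n (Suc s). real (Suc s) * real (col_rank M k T))"
    by (rule sum.cong) (auto simp: subs_def)
  also have "(\<Sum>S\<in>subs n s. \<Sum>j\<in>{..<n}-S. real (col_rank M k S))
      = (\<Sum>S\<in>subs n s. real (n - s) * real (col_rank M k S))"
  proof (rule sum.cong)
    fix S assume "S \<in> subs n s"
    then have "card ({..<n} - S) = n - s" by (auto simp: subs_def card_Diff_subset finite_subset)
    then show "(\<Sum>j\<in>{..<n}-S. real (col_rank M k S)) = real (n - s) * real (col_rank M k S)" by simp
  qed simp
  finally show ?thesis by (simp add: info_fun_subs sum_distrib_left)
qed

lemma pair_sum:
  assumes "finite B"
  shows "(\<Sum>i\<in>B. \<Sum>j\<in>B-{i}. f j) = (real (card B) - 1) * (\<Sum>j\<in>B. f j :: real)"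
proof -
  have "(\<Sum>i\<in>B. \<Sum>j\<in>B-{i}. f j) = (\<Sum>i\<in>B. (\<Sum>j\<in>B. f j) - f i)"
    by (rule sum.cong) (auto simp: sum_diff1 assms)
  also have "\<dots> = real (card B) * (\<Sum>j\<in>B. f j) - (\<Sum>j\<in>B. f j)"
    by (simp add: sum_subtractf)
  finally show ?thesis by (simp add: algebra_simps)
qed

lemma D_concave:
  assumes "Suc s \<le> n"
  shows "real (Suc s) * D M k n (Suc s) \<le> real (n - Suc s) * D M k n s"
proof -
  define \<delta> where "\<delta> S j = real (col_rank M k (insert j S)) - real (col_rank M k S)" for S j
  have "real (Suc s) * D M k n (Suc s) = (\<Sum>T\<in>subs n (Suc s). \<Sum>i\<in>T. \<Sum>j\<in>{..<n}-T. \<delta> T j)"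
    unfolding D_def \<delta>_def sum_distrib_left
    by (rule sum.cong) (auto simp: subs_def sum_distrib_left)
  also have "\<dots> \<le> (\<Sum>T\<in>subs n (Suc s). \<Sum>i\<in>T. \<Sum>j\<in>{..<n}-T. \<delta> (T - {i}) j)"
  proof (intro sum_mono)
    fix T i j assume T: "T \<in> subs n (Suc s)"
    have "finite T" using T by (auto simp: subs_def intro: finite_subset)
    then show "\<delta> T j \<le> \<delta> (T - {i}) j" unfolding \<delta>_def by (rule col_rank_dimret) auto
  qed
  also have "\<dots> = (\<Sum>S\<in>subs n s. \<Sum>i\<in>{..<n}-S. \<Sum>j\<in>{..<n}-insert i S. \<delta> (insert i S - {i}) j)"
    by (rule dc[symmetric])
  also have "\<dots> = (\<Sum>S\<in>subs n s. \<Sum>i\<in>{..<n}-S. \<Sum>j\<in>({..<n}-S)-{i}. \<delta> S j)"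
    by (intro sum.cong refl) auto
  also have "\<dots> = (\<Sum>S\<in>subs n s. real (n - Suc s) * (\<Sum>j\<in>{..<n}-S. \<delta> S j))"
  proof (rule sum.cong[OF refl])
    fix S assume S: "S \<in> subs n s"
    then have c: "card ({..<n} - S) = n - s" by (auto simp: subs_def card_Diff_subset finite_subset)
    show "(\<Sum>i\<in>{..<n}-S. \<Sum>j\<in>({..<n}-S)-{i}. \<delta> S j) = real (n - Suc s) * (\<Sum>j\<in>{..<n}-S. \<delta> S j)"
      using pair_sum[of "{..<n}-S" "\<delta> S"] c assms by (simp add: of_nat_diff)
  qed
  also have "\<dots> = real (n - Suc s) * D M k n s"
    unfolding D_def \<delta>_def sum_distrib_left ..
  finally show ?thesis .
qed


definition Q :: "(nat \<Rightarrow> real) \<Rightarrow> nat \<Rightarrow> real \<Rightarrow> real" where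
  "Q c m p = (\<Sum>t<Suc m. p ^ t * (1 - p) ^ (m - t) * c t)"

definition Q' :: "(nat \<Rightarrow> real) \<Rightarrow> nat \<Rightarrow> real \<Rightarrow> real" where
  "Q' c m p = (\<Sum>t<m. p ^ t * (1 - p) ^ (m - 1 - t) * (real (Suc t) * c (Suc t) - real (m - t) * c t))"

lemma term_deriv:
  "((\<lambda>p::real. p ^ t * (1 - p) ^ (m - t) * c) has_real_derivative
     ((real t * p ^ (t - 1) * (1 - p) ^ (m - t) - real (m - t) * p ^ t * (1 - p) ^ (m - t - 1)) * c)) (at p)"
  by (auto intro!: derivative_eq_intros simp: algebra_simps)

lemma Q_deriv: "(Q c m has_real_derivative Q' c m p) (at p)"
proof -
  have d: "(Q c m has_real_derivative
     (\<Sum>t<Suc m. (real t * p ^ (t - 1) * (1 - p) ^ (m - t) - real (m - t) * p ^ t * (1 - p) ^ (m - t - 1)) * c t)) (at p)"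
    unfolding Q_def by (rule DERIV_sum) (rule term_deriv)
  have A: "(\<Sum>t<Suc m. real t * p ^ (t - 1) * (1 - p) ^ (m - t) * c t)
      = (\<Sum>t<m. real (Suc t) * p ^ t * (1 - p) ^ (m - 1 - t) * c (Suc t))"
  proof -
    have e: "\<And>t. m - Suc t = m - 1 - t" by auto
    show ?thesis unfolding sum.lessThan_Suc_shift e by simp
  qed
  have B: "(\<Sum>t<Suc m. real (m - t) * p ^ t * (1 - p) ^ (m - t - 1) * c t)
      = (\<Sum>t<m. real (m - t) * p ^ t * (1 - p) ^ (m - 1 - t) * (c t::real))"
  proof -
    have e: "\<And>t. m - t - 1 = m - 1 - t" by auto
    show ?thesis unfolding sum.lessThan_Suc e by simp
  qed
  have "(\<Sum>t<Suc m. (real t * p ^ (t - 1) * (1 - p) ^ (m - t) - real (m - t) * p ^ t * (1 - p) ^ (m - t - 1)) * c t)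
     = (\<Sum>t<Suc m. real t * p ^ (t - 1) * (1 - p) ^ (m - t) * c t - real (m - t) * p ^ t * (1 - p) ^ (m - t - 1) * c t)"
    by (rule sum.cong) (simp_all add: left_diff_distrib)
  also have "\<dots> = (\<Sum>t<Suc m. real t * p ^ (t - 1) * (1 - p) ^ (m - t) * c t) - (\<Sum>t<Suc m. real (m - t) * p ^ t * (1 - p) ^ (m - t - 1) * c t)"
    by (rule sum_subtractf)
  also have "\<dots> = (\<Sum>t<m. real (Suc t) * p ^ t * (1 - p) ^ (m - 1 - t) * c (Suc t) - real (m - t) * p ^ t * (1 - p) ^ (m - 1 - t) * c t)"
    unfolding A B by (rule sum_subtractf[symmetric])
  also have "\<dots> = Q' c m p" unfolding Q'_def
    by (rule sum.cong) (simp_all add: algebra_simps)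
  finally show ?thesis using d by simp
qed

lemma ftc01:
  assumes "\<And>x. (F has_real_derivative f x) (at x)"
  shows "(f has_integral (F 1 - F 0)) {0..1::real}"
  by (rule fundamental_theorem_of_calculus) (auto intro: has_field_derivative_at_within assms simp: has_real_derivative_iff_has_vector_derivative[symmetric])

lemma beta_int:
  "((\<lambda>p::real. p ^ t * (1 - p) ^ j) has_integral (fact t * fact j / fact (t + j + 1))) {0..1}"
proof (induction j arbitrary: t)
  case 0
  have "((\<lambda>p::real. p ^ t) has_integral ((\<lambda>p. p ^ Suc t / real (Suc t)) 1 - (\<lambda>p. p ^ Suc t / real (Suc t)) 0)) {0..1}"
    by (rule ftc01) (auto intro!: derivative_eq_intros simp del: power_Suc)
  moreover have "fact t * fact 0 / fact (t + 0 + 1) = (1::real) / real (Suc t)"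
    by (simp add: fact_Suc[of t])
  ultimately show ?case by simp
next
  case (Suc j)
  define F where "F p = p ^ Suc t * (1 - p) ^ Suc j" for p :: real
  have "((\<lambda>p. real (Suc t) * (p ^ t * (1 - p) ^ Suc j) - real (Suc j) * (p ^ Suc t * (1 - p) ^ j)) has_integral (F 1 - F 0)) {0..1}"
    unfolding F_def by (rule ftc01) (auto intro!: derivative_eq_intros simp del: power_Suc simp: algebra_simps)
  then have h0: "((\<lambda>p. real (Suc t) * (p ^ t * (1 - p) ^ Suc j) - real (Suc j) * (p ^ Suc t * (1 - p) ^ j)) has_integral 0) {0..1}"
    by (simp add: F_def)
  have h1: "((\<lambda>p. real (Suc j) * (p ^ Suc t * (1 - p) ^ j)) has_integral (real (Suc j) * (fact (Suc t) * fact j / fact (Suc t + j + 1)))) {0..1}"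
    by (rule has_integral_mult_right) (rule Suc.IH)
  have "((\<lambda>p. (real (Suc t) * (p ^ t * (1 - p) ^ Suc j) - real (Suc j) * (p ^ Suc t * (1 - p) ^ j)) + real (Suc j) * (p ^ Suc t * (1 - p) ^ j))
      has_integral (0 + real (Suc j) * (fact (Suc t) * fact j / fact (Suc t + j + 1)))) {0..1}"
    by (rule has_integral_add[OF h0 h1])
  then have "((\<lambda>p. real (Suc t) * (p ^ t * (1 - p) ^ Suc j)) has_integral (real (Suc j) * (fact (Suc t) * fact j / fact (Suc t + j + 1)))) {0..1}"
    by simp
  then have "((\<lambda>p. (1 / real (Suc t)) * (real (Suc t) * (p ^ t * (1 - p) ^ Suc j))) has_integral ((1 / real (Suc t)) * (real (Suc j) * (fact (Suc t) * fact j / fact (Suc t + j + 1))))) {0..1}"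
    by (rule has_integral_mult_right)
  moreover have V: "(1 / real (Suc t)) * (real (Suc j) * (fact (Suc t) * fact j / fact (Suc t + j + 1))) = fact t * fact (Suc j) / fact (t + Suc j + 1)"
  proof -
    have e: "Suc t + j + 1 = t + Suc j + 1" by simp
    obtain X where X: "fact (t + Suc j + 1) = (X::real)" by blast
    have X0: "X \<noteq> 0" using X fact_nonzero by metis
    have "real (Suc t) \<noteq> 0" by simp
    have gen: "\<And>a b c d Y. (a::real) \<noteq> 0 \<Longrightarrow> (1 / a) * (b * (a * c * d / Y)) = c * (b * d) / Y"
      by (simp add: field_simps)
    show ?thesis unfolding e X fact_Suc[of t] fact_Suc[of j]
      by (rule gen) simp
  qed
  moreover have F: "(\<lambda>p. (1 / real (Suc t)) * (real (Suc t) * (p ^ t * (1 - p) ^ Suc j))) = (\<lambda>p. p ^ t * (1 - p) ^ Suc j)"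
    by (rule ext) simp
  ultimately show ?case by (simp only: V F)
qed


definition acoef :: "(nat \<Rightarrow> nat \<Rightarrow> bit) \<Rightarrow> nat \<Rightarrow> nat \<Rightarrow> nat \<Rightarrow> real" where
  "acoef M k n t = real (n - t) * info_fun M k n (n - t) - real (t + 1) * info_fun M k n (n - 1 - t)"

definition Pc :: "(nat \<Rightarrow> nat \<Rightarrow> bit) \<Rightarrow> nat \<Rightarrow> nat \<Rightarrow> real \<Rightarrow> real" where
  "Pc M k n p = (\<Sum>t<n. p ^ t * (1 - p) ^ (n - 1 - t) *
        (real (n - t) * info_fun M k n (n - t) - real (t + 1) * info_fun M k n (n - 1 - t)))"

lemma Pc_Q: "Pc M k (Suc m) = Q (acoef M k (Suc m)) m"
  unfolding Pc_def Q_def acoef_def by (rule ext) simp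

lemma acoef_D: "t < n \<Longrightarrow> acoef M k n t = D M k n (n - 1 - t)"
  unfolding acoef_def D_eq by (simp add: Suc_diff_Suc)

lemma Pc_deriv: "(Pc M k (Suc m) has_real_derivative Q' (acoef M k (Suc m)) m p) (at p)"
  unfolding Pc_Q by (rule Q_deriv)

lemma Q'_nonneg:
  assumes "0 \<le> p" "p \<le> 1"
  shows "0 \<le> Q' (acoef M k (Suc m)) m p"
  unfolding Q'_def
proof (rule sum_nonneg)
  fix t assume t: "t \<in> {..<m}"
  define s where "s = m - 1 - t"
  have e3: "Suc t = Suc m - Suc s" "m - t = Suc s" using t by (auto simp: s_def)
  have e1: "acoef M k (Suc m) (Suc t) = D M k (Suc m) s"
    using t by (subst acoef_D) (auto simp: s_def)
  have e2: "acoef M k (Suc m) t = D M k (Suc m) (Suc s)"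
    using t e3(2) by (subst acoef_D) auto
  have "real (Suc s) * D M k (Suc m) (Suc s) \<le> real (Suc m - Suc s) * D M k (Suc m) s"
    by (rule D_concave) (use t in \<open>auto simp: s_def\<close>)
  then have "0 \<le> real (Suc t) * acoef M k (Suc m) (Suc t) - real (m - t) * acoef M k (Suc m) t"
    unfolding e1 e2 unfolding e3 by simp
  then show "0 \<le> p ^ t * (1 - p) ^ (m - 1 - t) * (real (Suc t) * acoef M k (Suc m) (Suc t) - real (m - t) * acoef M k (Suc m) t)"
    using assms by simp
qed

lemma info_fun_0: "info_fun M k n 0 = 0"
proof -
  have "subs n 0 = {{}}"
    unfolding subs_def by (auto intro: finite_subset) (metis card_0_eq finite_lessThan finite_subset empty_iff)
  then show ?thesis by (simp add: info_fun_subs col_rank_empty)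
qed

lemma info_fun_n: "info_fun M k n n = real (col_rank M k {..<n})"
proof -
  have "subs n n = {{..<n}}"
  proof -
    have "\<And>S. S \<subseteq> {..<n} \<Longrightarrow> card S = n \<Longrightarrow> S = {..<n}"
      by (rule card_subset_eq) auto
    then show ?thesis unfolding subs_def by auto
  qed
  then show ?thesis by (simp add: info_fun_subs)
qed

lemma info_fun_1: "info_fun M k n 1 \<le> real n"
proof -
  have "info_fun M k n 1 = (\<Sum>S\<in>subs n 1. real (col_rank M k S))" by (rule info_fun_subs)
  also have "\<dots> \<le> (\<Sum>S\<in>subs n 1. 1)"
  proof (rule sum_mono)
    fix S assume "S \<in> subs n 1"
    then have "finite S" "card S = 1" by (auto simp: subs_def intro: finite_subset)
    then show "real (col_rank M k S) \<le> 1" using col_rank_le_card[of S M k] by simp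
  qed
  also have "\<dots> = real (card (subs n 1))" by simp
  also have "card (subs n 1) = n" unfolding subs_def using n_subsets[of "{..<n}" 1] by simp
  finally show ?thesis by simp
qed

lemma Pc_1: "Pc M k (Suc m) 1 \<le> real (Suc m)"
proof -
  have "Pc M k (Suc m) 1 = acoef M k (Suc m) m"
  proof -
    have "(\<Sum>t<m. 1 ^ t * (1 - 1) ^ (m - t) * acoef M k (Suc m) t) = (0::real)"
      by (rule sum.neutral) auto
    then show ?thesis unfolding Pc_Q Q_def sum.lessThan_Suc by simp
  qed
  also have "\<dots> = info_fun M k (Suc m) 1 - real (Suc m) * info_fun M k (Suc m) 0"
    unfolding acoef_def by simp
  also have "\<dots> \<le> real (Suc m)" using info_fun_1[of M k "Suc m"] by (simp add: info_fun_0)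
  finally show ?thesis .
qed

lemma Pc_int:
  assumes "col_rank M k {..<Suc m} = k"
  shows "(Pc M k (Suc m) has_integral real k) {0..1}"
proof -
  define n where "n = Suc m"
  define c where "c = acoef M k n"
  define w where "w g = fact g * fact (n - g) / fact n * info_fun M k n g" for g
  have "((\<lambda>p. \<Sum>t<Suc m. p ^ t * (1 - p) ^ (m - t) * c t) has_integral
        (\<Sum>t<Suc m. fact t * fact (m - t) / fact (t + (m - t) + 1) * c t)) {0..1}"
    by (intro has_integral_sum finite_lessThan has_integral_mult_left beta_int)
  moreover have "(\<Sum>t<Suc m. fact t * fact (m - t) / fact (t + (m - t) + 1) * c t)
      = (\<Sum>t<n. w (n - t) - w (n - Suc t))"
  proof (rule sum.cong)
    show "{..<Suc m} = {..<n}" by (simp add: n_def)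
  next
    fix t assume "t \<in> {..<n}"
    then have t: "t \<le> m" by (simp add: n_def)
    have a1: "t + (m - t) + 1 = n" using t by (simp add: n_def)
    have a2: "n - t = Suc (m - t)" "n - Suc t = m - t" "n - (m - t) = Suc t" using t by (auto simp: n_def)
    have a3: "n - 1 - t = m - t" by (simp add: n_def)
    have w1: "w (n - t) = (real (Suc (m - t)) * fact (m - t)) * fact t / fact n * info_fun M k n (Suc (m - t))"
      unfolding w_def using a2 t by (simp add: fact_Suc n_def)
    have w2: "w (n - Suc t) = fact (m - t) * (real (Suc t) * fact t) / fact n * info_fun M k n (m - t)"
      unfolding w_def using a2 by (simp add: fact_Suc del: of_nat_Suc)
    have ca: "c t = real (Suc (m - t)) * info_fun M k n (Suc (m - t)) - real (Suc t) * info_fun M k n (m - t)"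
      unfolding c_def acoef_def a3 using a2 by simp
    have aux: "\<And>(ft::real) fm N A B E1 E0. N \<noteq> 0 \<Longrightarrow> ft * fm / N * (A * E1 - B * E0) = (A * fm) * ft / N * E1 - fm * (B * ft) / N * E0"
      by (simp add: field_simps)
    show "fact t * fact (m - t) / fact (t + (m - t) + 1) * c t = w (n - t) - w (n - Suc t)"
      unfolding w1 w2 ca a1 by (rule aux) simp
  qed
  moreover have "(\<Sum>t<n. w (n - t) - w (n - Suc t)) = real k"
  proof -
    have "(\<Sum>t<n. w (n - t) - w (n - Suc t)) = w (n - 0) - w (n - n)"
      by (rule sum_lessThan_telescope'[where f="\<lambda>t. w (n - t)"])
    also have "\<dots> = real k"
      unfolding w_def using assms by (simp add: info_fun_0 info_fun_n n_def)
    finally show ?thesis .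
  qed
  ultimately show ?thesis unfolding Pc_Q Q_def c_def n_def by simp
qed


definition hh :: "real \<Rightarrow> real \<Rightarrow> real" where
  "hh R x = 1 - exp (- x / R) - x"

lemma hh_deriv: "R \<noteq> 0 \<Longrightarrow> (hh R has_real_derivative (exp (- x / R) / R - 1)) (at x)"
  unfolding hh_def by (auto intro!: derivative_eq_intros simp: field_simps)

lemma hh_0: "hh R 0 = 0" by (simp add: hh_def)

lemma hh_order:
  assumes R: "0 < R" and g: "0 < g" "hh R g = 0" and x: "g < x"
  shows "hh R x < 0"
proof (rule ccontr)
  assume "\<not> hh R x < 0"
  then have hx: "hh R x \<ge> 0" by simp
  obtain c1 where c1: "0 < c1" "c1 < g" "hh R g - hh R 0 = (g - 0) * (exp (- c1 / R) / R - 1)"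
    using MVT2[OF g(1), of "hh R" "\<lambda>x. exp (- x / R) / R - 1"] hh_deriv R by auto
  obtain c2 where c2: "g < c2" "c2 < x" "hh R x - hh R g = (x - g) * (exp (- c2 / R) / R - 1)"
    using MVT2[OF x, of "hh R" "\<lambda>x. exp (- x / R) / R - 1"] hh_deriv R by auto
  have d1: "exp (- c1 / R) / R - 1 = 0" using c1 g hh_0 by simp
  have d2: "exp (- c2 / R) / R - 1 \<ge> 0"
  proof -
    have "(x - g) * (exp (- c2 / R) / R - 1) \<ge> 0" using c2(3) hx g(2) by simp
    then show ?thesis using x by (simp add: zero_le_mult_iff)
  qed
  have "exp (- c2 / R) < exp (- c1 / R)" using c1 c2 R by (simp add: divide_strict_right_mono)
  then have "exp (- c2 / R) / R < exp (- c1 / R) / R" using R by (simp add: divide_strict_right_mono)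
  then show False using d1 d2 by simp
qed

lemma hh_exists:
  assumes R: "0 < R" "R < 1"
  shows "\<exists>g. 0 < g \<and> g < 1 \<and> hh R g = 0"
proof -
  have "0 < exp (- 0 / R) / R - 1" using R by (simp add: field_simps)
  then obtain d where d: "d > 0" "\<forall>h>0. h < d \<longrightarrow> hh R 0 < hh R (0 + h)"
    using DERIV_pos_inc_right[OF hh_deriv[of R 0]] R by auto
  define e where "e = min (d / 2) (1 / 2)"
  have e: "0 < e" "e < d" "e < 1" using d by (auto simp: e_def)
  have he: "hh R e > 0" using d(2) e hh_0 by auto
  have h1: "hh R 1 < 0" by (simp add: hh_def)
  have cont: "continuous_on {e..1} (hh R)"
  proof (intro continuous_at_imp_continuous_on ballI)
    fix x show "isCont (hh R) x" using hh_deriv[of R x] R by (intro DERIV_isCont) auto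
  qed
  obtain g where g: "e \<le> g" "g \<le> 1" "hh R g = 0"
    using IVT2'[of "hh R" 1 0 e, OF _ _ _ cont] he h1 e by auto
  have "g \<noteq> 1" using g h1 by auto
  then show ?thesis using g e by (intro exI[of _ g]) auto
qed

lemma GG_spec:
  assumes R: "0 < R" "R < 1"
  shows "0 < GG R \<and> GG R < 1 \<and> GG R = 1 - exp (- GG R / R)"
proof -
  have ex1: "\<exists>!G. 0 < G \<and> G < 1 \<and> G = 1 - exp (- G / R)"
  proof -
    obtain g where g: "0 < g" "g < 1" "hh R g = 0" using hh_exists[OF R] by blast
    show ?thesis
    proof (rule ex1I[of _ g])
      show "0 < g \<and> g < 1 \<and> g = 1 - exp (- g / R)" using g by (simp add: hh_def)
    next
      fix y assume y: "0 < y \<and> y < 1 \<and> y = 1 - exp (- y / R)"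
      then have hy: "hh R y = 0" by (simp add: hh_def)
      show "y = g"
      proof (rule ccontr)
        assume "y \<noteq> g"
        then consider "y < g" | "g < y" by linarith
        then show False
        proof cases
          case 1 then show False using hh_order[OF R(1) _ hy, of g] y g by simp
        next
          case 2 then show False using hh_order[OF R(1) g(1) g(3), of y] hy by simp
        qed
      qed
    qed
  qed
  show ?thesis unfolding GG_def using theI'[OF ex1] .
qed

lemma GG_ge:
  assumes R: "0 < R" "R < 1" and x: "0 < x" "x \<le> 1 - exp (- x / R)"
  shows "x \<le> GG R"
proof (rule ccontr)
  assume "\<not> x \<le> GG R"
  then have "GG R < x" by simp
  moreover have "hh R (GG R) = 0" using GG_spec[OF R] by (simp add: hh_def)
  ultimately have "hh R x < 0" using hh_order[OF R(1)] GG_spec[OF R] by blast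
  then show False using x by (simp add: hh_def)
qed


lemma area_argument:
  fixes f f' :: "real \<Rightarrow> real" and R G :: real
  assumes R: "0 < R" and G: "0 < G"
    and deriv: "\<And>p. (f has_real_derivative f' p) (at p)"
    and f'nn: "\<And>p. 0 \<le> p \<Longrightarrow> p \<le> 1 \<Longrightarrow> 0 \<le> f' p"
    and int: "(f has_integral R) {0..1}"
    and f1: "f 1 \<le> 1"
    and conv: "(\<lambda>l. ((\<lambda>x. 1 - exp (- (G / R) * f x)) ^^ l) (1 - exp (- G / R))) \<longlonglongrightarrow> 0"
  shows "G \<le> 1 - exp (- G / R)"
proof -
  define a where "a = G / R"
  have a: "0 < a" using R G by (simp add: a_def)
  define \<phi> where "\<phi> x = 1 - exp (- a * f x)" for x
  define ps where "ps l = (\<phi> ^^ l) (1 - exp (- a))" for l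
  have psS: "ps (Suc l) = \<phi> (ps l)" for l by (simp add: ps_def)
  have ps0: "ps 0 = 1 - exp (- a)" by (simp add: ps_def)
  have e: "- G / R = - a" unfolding a_def by (rule minus_divide_left[symmetric])
  have conv': "ps \<longlonglongrightarrow> 0" using conv unfolding ps_def \<phi>_def e a_def[symmetric] .
  have contf: "isCont f x" for x using deriv by (rule DERIV_isCont)
  have cont\<phi>: "isCont \<phi> x" for x unfolding \<phi>_def by (intro continuous_intros contf)
  have mono: "f x \<le> f y" if "0 \<le> x" "x \<le> y" "y \<le> 1" for x y
  proof (rule DERIV_nonneg_imp_increasing_open[OF that(2)])
    fix z assume "x < z" "z < y"
    then show "\<exists>d. (f has_real_derivative d) (at z) \<and> 0 \<le> d" using that deriv f'nn by force
  next
    show "continuous_on {x..y} f" by (intro continuous_at_imp_continuous_on ballI contf)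
  qed
  have f0: "f 0 = 0"
  proof -
    have "(\<lambda>l. \<phi> (ps l)) \<longlonglongrightarrow> \<phi> 0" by (rule isCont_tendsto_compose[OF cont\<phi> conv'])
    moreover have "(\<lambda>l. \<phi> (ps l)) \<longlonglongrightarrow> 0" using LIMSEQ_Suc[OF conv'] unfolding psS .
    ultimately have "\<phi> 0 = 0" using LIMSEQ_unique by blast
    then have "exp (- a * f 0) = 1" by (simp add: \<phi>_def)
    then have "- a * f 0 = 0" by simp
    then show ?thesis using a by simp
  qed
  have \<phi>le: "\<phi> x \<le> x" if x: "0 \<le> x" "x \<le> 1" for x
  proof (cases "x = 0")
    case True then show ?thesis by (simp add: \<phi>_def f0)
  next
    case False
    with x have xpos: "0 < x" by simp
    show ?thesis
    proof (rule ccontr)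
      assume "\<not> \<phi> x \<le> x"
      then have px: "x \<le> \<phi> x" by simp
      have \<phi>mono: "\<phi> x \<le> \<phi> y" if "x \<le> y" "y \<le> 1" for y
      proof -
        have "f x \<le> f y" using mono[OF _ that] xpos by simp
        then have "- a * f y \<le> - a * f x" using a by simp
        then show ?thesis unfolding \<phi>_def by simp
      qed
      have "x \<le> ps l \<and> ps l \<le> 1" for l
      proof (induction l)
        case 0
        have "f x \<le> 1" using mono[of x 1] x f1 by simp
        then have "- a \<le> - a * f x" using a by simp
        then have "\<phi> x \<le> 1 - exp (- a)" unfolding \<phi>_def by simp
        then show ?case using px ps0 by simp
      next
        case (Suc l)
        then have "\<phi> x \<le> \<phi> (ps l)" using \<phi>mono by simp
        moreover have "\<phi> (ps l) \<le> 1" by (simp add: \<phi>_def)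
        ultimately show ?case using px psS by simp
      qed
      then have "x \<le> 0" using LIMSEQ_le_const[OF conv', of x] by blast
      then show False using xpos by simp
    qed
  qed
  define F where "F q = q + exp (- a * q) / a" for q
  have "((\<lambda>x. \<phi> x * f' x) has_integral ((\<lambda>x. F (f x)) 1 - (\<lambda>x. F (f x)) 0)) {0..1}"
  proof (rule fundamental_theorem_of_calculus[where f="\<lambda>x. F (f x)"])
    fix x :: real assume "x \<in> {0..1}"
    have "((\<lambda>x. F (f x)) has_real_derivative ((1 - exp (- a * f x)) * f' x)) (at x)"
      unfolding F_def using a
      by (auto intro!: derivative_eq_intros deriv simp: field_simps)
    then show "((\<lambda>x. F (f x)) has_vector_derivative \<phi> x * f' x) (at x within {0..1})"
      unfolding \<phi>_def has_real_derivative_iff_has_vector_derivative[symmetric]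
      by (rule has_field_derivative_at_within)
  qed simp
  then have I1: "((\<lambda>x. \<phi> x * f' x) has_integral (f 1 + exp (- a * f 1) / a - 1 / a)) {0..1}"
    by (simp add: F_def f0)
  have "((\<lambda>x. f x + x * f' x) has_integral ((\<lambda>x. x * f x) 1 - (\<lambda>x. x * f x) 0)) {0..1}"
  proof (rule fundamental_theorem_of_calculus[where f="\<lambda>x. x * f x"])
    fix x :: real assume "x \<in> {0..1}"
    have "((\<lambda>x. x * f x) has_real_derivative (f x + x * f' x)) (at x)"
      by (auto intro!: derivative_eq_intros deriv)
    then show "((\<lambda>x. x * f x) has_vector_derivative f x + x * f' x) (at x within {0..1})"
      unfolding has_real_derivative_iff_has_vector_derivative[symmetric]
      by (rule has_field_derivative_at_within)
  qed simp
  from has_integral_diff[OF this int]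
  have I2: "((\<lambda>x. x * f' x) has_integral (f 1 - R)) {0..1}" by simp
  have "f 1 + exp (- a * f 1) / a - 1 / a \<le> f 1 - R"
  proof (rule has_integral_le[OF I1 I2])
    fix x :: real assume "x \<in> {0..1}"
    then show "\<phi> x * f' x \<le> x * f' x" using \<phi>le f'nn by (auto intro: mult_right_mono)
  qed
  then have "R \<le> 1 / a - exp (- a * f 1) / a" by linarith
  then have "a * R \<le> a * (1 / a - exp (- a * f 1) / a)" using a by (simp add: mult_left_mono)
  also have "\<dots> = 1 - exp (- a * f 1)" using a by (simp add: field_simps)
  finally have "a * R \<le> 1 - exp (- a * f 1)" .
  moreover have "exp (- a) \<le> exp (- a * f 1)" using a f1 by simp
  moreover have "a * R = G" using R by (simp add: a_def)
  ultimately have "G \<le> 1 - exp (- a)" by linarith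
  then show ?thesis unfolding e .
qed


theorem mainTheorem8:
  fixes \<theta> k :: nat and \<Lambda> :: "nat \<Rightarrow> real" and n :: "nat \<Rightarrow> nat"
    and M :: "nat \<Rightarrow> nat \<Rightarrow> nat \<Rightarrow> bit" and R :: real
  assumes "\<theta> \<ge> 1"
    and "\<forall>h<\<theta>. good_gen_matrix (M h) k (n h)"
    and "\<forall>h<\<theta>. \<Lambda> h \<ge> 0"
    and "(\<Sum>h<\<theta>. \<Lambda> h) = 1"
    and "R = real k / avg_len \<theta> \<Lambda> n"
    and "0 < R" and "R < 1"
  shows "threshold \<theta> \<Lambda> n M k \<le> GG R"
proof -
  define nb where "nb = avg_len \<theta> \<Lambda> n"
  have Rdef: "R = real k / nb" using assms(5) by (simp add: nb_def)
  have kpos: "0 < k" using assms(6) Rdef by (cases "k = 0") auto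
  have nbpos: "0 < nb" using assms(6) Rdef kpos by (simp add: zero_less_divide_iff)
  have rank: "col_rank (M h) k {..<n h} = k" if "h < \<theta>" for h
    using assms(2) that unfolding good_gen_matrix_def by blast
  have nh: "n h = Suc (n h - 1)" if "h < \<theta>" for h
  proof -
    have "k \<le> n h" using rank[OF that] col_rank_le_card[of "{..<n h}" "M h" k] by simp
    then show ?thesis using kpos by simp
  qed
  define fb where "fb = f_b \<theta> \<Lambda> n M k"
  define fb' where "fb' p = (1 / nb) * (\<Sum>h<\<theta>. \<Lambda> h * Q' (acoef (M h) k (n h)) (n h - 1) p)" for p
  have fb_eq: "fb = (\<lambda>p. (1 / nb) * (\<Sum>h<\<theta>. \<Lambda> h * Pc (M h) k (n h) p))"
    unfolding fb_def f_b_def Pc_def nb_def by (rule ext) simp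
  have deriv: "(fb has_real_derivative fb' p) (at p)" for p
    unfolding fb_eq fb'_def
  proof (rule DERIV_cmult, rule DERIV_sum)
    fix h assume "h \<in> {..<\<theta>}"
    then have "n h = Suc (n h - 1)" using nh by simp
    then have "(Pc (M h) k (n h) has_real_derivative Q' (acoef (M h) k (n h)) (n h - 1) p) (at p)"
      using Pc_deriv[of "M h" k "n h - 1" p] by simp
    then show "((\<lambda>x. \<Lambda> h * Pc (M h) k (n h) x) has_real_derivative \<Lambda> h * Q' (acoef (M h) k (n h)) (n h - 1) p) (at p)"
      by (rule DERIV_cmult)
  qed
  have fb'nn: "0 \<le> fb' p" if "0 \<le> p" "p \<le> 1" for p
    unfolding fb'_def
  proof (rule mult_nonneg_nonneg)
    show "0 \<le> 1 / nb" using nbpos by simp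
  next
    show "0 \<le> (\<Sum>h<\<theta>. \<Lambda> h * Q' (acoef (M h) k (n h)) (n h - 1) p)"
    proof (rule sum_nonneg)
    fix h assume h: "h \<in> {..<\<theta>}"
    then have e: "n h = Suc (n h - 1)" using nh by simp
    have "0 \<le> Q' (acoef (M h) k (Suc (n h - 1))) (n h - 1) p" by (rule Q'_nonneg[OF that])
    then have "0 \<le> Q' (acoef (M h) k (n h)) (n h - 1) p" using e by metis
    then show "0 \<le> \<Lambda> h * Q' (acoef (M h) k (n h)) (n h - 1) p" using assms(3) h by simp
    qed
  qed
  have int: "(fb has_integral R) {0..1}"
  proof -
    have "((\<lambda>p. (1 / nb) * (\<Sum>h<\<theta>. \<Lambda> h * Pc (M h) k (n h) p)) has_integral ((1 / nb) * (\<Sum>h<\<theta>. \<Lambda> h * real k))) {0..1}"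
    proof (rule has_integral_mult_right, rule has_integral_sum, rule finite_lessThan)
      fix h assume h: "h \<in> {..<\<theta>}"
      then have e: "n h = Suc (n h - 1)" using nh by simp
      have "(Pc (M h) k (Suc (n h - 1)) has_integral real k) {0..1}"
        by (rule Pc_int) (use rank h e in \<open>auto\<close>)
      then have "(Pc (M h) k (n h) has_integral real k) {0..1}" using e by metis
      then show "((\<lambda>p. \<Lambda> h * Pc (M h) k (n h) p) has_integral \<Lambda> h * real k) {0..1}"
        by (rule has_integral_mult_right)
    qed
    moreover have "(1 / nb) * (\<Sum>h<\<theta>. \<Lambda> h * real k) = R"
      using assms(4) Rdef by (simp add: sum_distrib_right[symmetric])
    ultimately show ?thesis unfolding fb_eq by simp
  qed
  have f1: "fb 1 \<le> 1"
  proof -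
    have "(\<Sum>h<\<theta>. \<Lambda> h * Pc (M h) k (n h) 1) \<le> (\<Sum>h<\<theta>. \<Lambda> h * real (n h))"
    proof (rule sum_mono)
      fix h assume h: "h \<in> {..<\<theta>}"
      then have e: "n h = Suc (n h - 1)" using nh by simp
      have "Pc (M h) k (Suc (n h - 1)) 1 \<le> real (Suc (n h - 1))" by (rule Pc_1)
      then have "Pc (M h) k (n h) 1 \<le> real (n h)" using e by metis
      then show "\<Lambda> h * Pc (M h) k (n h) 1 \<le> \<Lambda> h * real (n h)" using assms(3) h by (simp add: mult_left_mono)
    qed
    then have "(1 / nb) * (\<Sum>h<\<theta>. \<Lambda> h * Pc (M h) k (n h) 1) \<le> (1 / nb) * nb"
      using nbpos unfolding nb_def avg_len_def by (intro mult_left_mono) auto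
    then show ?thesis unfolding fb_eq using nbpos by simp
  qed
  define X where "X = {G. G \<ge> 0 \<and> p_seq fb G R \<longlonglongrightarrow> 0}"
  have thr: "threshold \<theta> \<Lambda> n M k = Sup X"
    unfolding threshold_def X_def fb_def Rdef nb_def ..
  have GGs: "0 < GG R \<and> GG R < 1 \<and> GG R = 1 - exp (- GG R / R)" using GG_spec assms(6,7) by blast
  have "0 \<in> X"
  proof -
    have "p_seq fb 0 R l = 0" for l
      unfolding p_seq_def f_s_def by (induction l) auto
    then have "p_seq fb 0 R = (\<lambda>_. 0)" by (rule ext)
    then show ?thesis unfolding X_def by simp
  qed
  moreover have "\<forall>G\<in>X. G \<le> GG R"
  proof
    fix G assume "G \<in> X"
    then have G: "0 \<le> G" "p_seq fb G R \<longlonglongrightarrow> 0" unfolding X_def by auto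
    show "G \<le> GG R"
    proof (cases "G = 0")
      case True then show ?thesis using GGs by simp
    next
      case False
      then have Gpos: "0 < G" using G by simp
      have conv: "(\<lambda>l. ((\<lambda>x. 1 - exp (- (G / R) * fb x)) ^^ l) (1 - exp (- G / R))) \<longlonglongrightarrow> 0"
        using G(2) unfolding p_seq_def f_s_def .
      have "G \<le> 1 - exp (- G / R)"
        by (rule area_argument[OF assms(6) Gpos deriv fb'nn int f1 conv])
      then show ?thesis using GG_ge assms(6,7) Gpos by blast
    qed
  qed
  ultimately have "Sup X \<le> GG R" by (intro cSup_least) auto
  then show ?thesis unfolding thr .
qed


end
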